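(* Let $F$ be a field of characteristic $2$, let $i\le n$ be positive integers, let $X_1,\dots,X_{i-1},Y_i,\dots,Y_n,Z_i,\dots,Z_n$ be indeterminates, and let $K=F(X_1,\dots,X_{i-1},Y_i,\dots,Y_n,Z_i,\dots,Z_n)$. Then $$\mathfrak b:=\langle\langle X_1,\dots,X_{i-1}\rangle\rangle_b\otimes\big(\langle\langle Y_i,\dots,Y_n\rangle\rangle_b'\perp\langle\langle Z_i,\dots,Z_n\rangle\rangle_b'\big)$$ is an anisotropic symmetric bilinear form over $K$ of dimension $2^{n+1}-2^i$ with $[\mathfrak b]\in I^n(K)$.
   Context: $\langle\langle a_1,\dots,a_m\rangle\rangle_b=\langle1,a_1\rangle_b\otimes\cdots\otimes\langle1,a_m\rangle_b$ is the $m$-fold bilinear Pfister form, i.e. $\perp_{S\subseteq\{1,\dots,m\}}\langle\prod_{j\in S}a_j\rangle_b$; its pure part $\langle\langle a_1,\dots,a_m\rangle\rangle_b'$ (for $m\ge1$) is $\perp_{\emptyset\ne S\subseteq\{1,\dots,m\}}\langle\prod_{j\in S}a_j\rangle_b$, the complement of $\langle1\rangle_b$. $W(K)$ is the Witt ring of (non-degenerate) symmetric bilinear forms, $I(K)$ its fundamental ideal and $I^n(K)$ its $n$-th power; a form is anisotropic if $\mathfrak b(v,v)\ne0$ for $v\ne0$. *)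

theory Defs
  imports Main "HOL-Library.Poly_Mapping"
begin

definition subfield :: "'k::field set \<Rightarrow> bool" where
  "subfield F \<longleftrightarrow> 0 \<in> F \<and> 1 \<in> F \<and>
     (\<forall>a\<in>F. \<forall>b\<in>F. a + b \<in> F \<and> a - b \<in> F \<and> a * b \<in> F) \<and>
     (\<forall>a\<in>F. inverse a \<in> F)"

text \<open>Multivariate polynomials in variables of type 'v: finitely supported maps from
  monomials (finitely supported exponent vectors) to coefficients.\<close>

type_synonym ('v, 'k) mpoly = "('v \<Rightarrow>\<^sub>0 nat) \<Rightarrow>\<^sub>0 'k"

definition mpoly_over :: "'k set \<Rightarrow> 'v set \<Rightarrow> ('v, 'k::field) mpoly \<Rightarrow> bool" where
  "mpoly_over F V p \<longleftrightarrow> (\<forall>m. Poly_Mapping.lookup p m \<in> F) \<and>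
     (\<forall>m. Poly_Mapping.lookup p m \<noteq> 0 \<longrightarrow> (\<forall>v. Poly_Mapping.lookup m v \<noteq> 0 \<longrightarrow> v \<in> V))"

definition mpoly_eval :: "('v \<Rightarrow> 'k::field) \<Rightarrow> ('v, 'k) mpoly \<Rightarrow> 'k" where
  "mpoly_eval g p = (\<Sum>m\<in>Poly_Mapping.keys p. Poly_Mapping.lookup p m * (\<Prod>v\<in>Poly_Mapping.keys m. g v ^ Poly_Mapping.lookup m v))"

text \<open>The whole field 'k equals F(g v | v \<in> V), with the g v (v \<in> V) algebraically
  independent over F; i.e. 'k is the rational function field over F in the indeterminates
  indexed by V.\<close>

definition rational_function_field :: "'k::field set \<Rightarrow> ('v \<Rightarrow> 'k) \<Rightarrow> 'v set \<Rightarrow> bool" where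
  "rational_function_field F g V \<longleftrightarrow> subfield F \<and>
     (\<forall>p. mpoly_over F V p \<and> mpoly_eval g p = 0 \<longrightarrow> p = 0) \<and>
     (\<forall>x::'k. \<exists>p q. mpoly_over F V p \<and> mpoly_over F V q \<and> mpoly_eval g q \<noteq> 0 \<and>
                    x = mpoly_eval g p / mpoly_eval g q)"

datatype var = VX nat | VY nat | VZ nat

definition gens :: "(nat \<Rightarrow> 'k) \<Rightarrow> (nat \<Rightarrow> 'k) \<Rightarrow> (nat \<Rightarrow> 'k) \<Rightarrow> var \<Rightarrow> 'k" where
  "gens X Y Z v = (case v of VX j \<Rightarrow> X j | VY j \<Rightarrow> Y j | VZ j \<Rightarrow> Z j)"

definition vars :: "nat \<Rightarrow> nat \<Rightarrow> var set" where
  "vars i n = VX ` {1..<i} \<union> VY ` {i..n} \<union> VZ ` {i..n}"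

text \<open>A form is (m, B): dimension m and Gram matrix B (only entries with indices < m matter).\<close>
type_synonym 'k bform = "nat \<times> (nat \<Rightarrow> nat \<Rightarrow> 'k)"

definition bil :: "'k bform \<Rightarrow> (nat \<Rightarrow> 'k) \<Rightarrow> (nat \<Rightarrow> 'k) \<Rightarrow> 'k::field" where
  "bil f v w = (\<Sum>a<fst f. \<Sum>b<fst f. v a * snd f a b * w b)"

definition nonzero_vec :: "nat \<Rightarrow> (nat \<Rightarrow> 'k::zero) \<Rightarrow> bool" where
  "nonzero_vec m v \<longleftrightarrow> (\<exists>a<m. v a \<noteq> 0)"

definition sym_nondeg :: "'k::field bform \<Rightarrow> bool" where
  "sym_nondeg f \<longleftrightarrow> (\<forall>a<fst f. \<forall>b<fst f. snd f a b = snd f b a) \<and>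
     (\<forall>v. nonzero_vec (fst f) v \<longrightarrow> (\<exists>w. bil f v w \<noteq> 0))"

definition anisotropic :: "'k::field bform \<Rightarrow> bool" where
  "anisotropic f \<longleftrightarrow> (\<forall>v. nonzero_vec (fst f) v \<longrightarrow> bil f v v \<noteq> 0)"

definition orth :: "'k::field bform \<Rightarrow> 'k bform \<Rightarrow> 'k bform" where
  "orth f g = (fst f + fst g, \<lambda>a b. if a < fst f \<and> b < fst f then snd f a b
       else if fst f \<le> a \<and> fst f \<le> b then snd g (a - fst f) (b - fst f) else 0)"

definition tensor :: "'k::field bform \<Rightarrow> 'k bform \<Rightarrow> 'k bform" where
  "tensor f g = (fst f * fst g, \<lambda>a b. snd f (a div fst g) (b div fst g) * snd g (a mod fst g) (b mod fst g))"

definition negf :: "'k::field bform \<Rightarrow> 'k bform" where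
  "negf f = (fst f, \<lambda>a b. - snd f a b)"

definition diagf :: "'k::field list \<Rightarrow> 'k bform" where
  "diagf xs = (length xs, \<lambda>a b. if a = b \<and> a < length xs then xs ! a else 0)"

definition zerof :: "'k::field bform" where
  "zerof = (0, \<lambda>_ _. 0)"

text \<open>Bilinear Pfister form <<a1,...,am>>_b = <1,a1>_b \<otimes> ... \<otimes> <1,am>_b, and its pure part
  (orthogonal complement of the first basis vector, whose value is 1).\<close>

definition pfister :: "'k::field list \<Rightarrow> 'k bform" where
  "pfister as = foldr (\<lambda>a f. tensor (diagf [1, a]) f) as (diagf [1])"

definition pure_pfister :: "'k::field list \<Rightarrow> 'k bform" where
  "pure_pfister as = (fst (pfister as) - 1, \<lambda>a b. snd (pfister as) (Suc a) (Suc b))"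

definition isometric :: "'k::field bform \<Rightarrow> 'k bform \<Rightarrow> bool" where
  "isometric f g \<longleftrightarrow> fst f = fst g \<and> (\<exists>P Q.
     (\<forall>a<fst f. \<forall>b<fst f. (\<Sum>c<fst f. P a c * Q c b) = (if a = b then 1 else 0)) \<and>
     (\<forall>a<fst f. \<forall>b<fst f. snd g a b = (\<Sum>c<fst f. \<Sum>d<fst f. P c a * snd f c d * P d b)))"

definition metabolic :: "'k::field bform \<Rightarrow> bool" where
  "metabolic f \<longleftrightarrow> sym_nondeg f \<and> (\<exists>k ws. 2 * k = fst f \<and>
     (\<forall>c. (\<forall>j<fst f. (\<Sum>a<k. c a * ws a j) = 0) \<longrightarrow> (\<forall>a<k. c a = 0)) \<and>
     (\<forall>a<k. \<forall>b<k. bil f (ws a) (ws b) = 0))"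

definition witt_eq :: "'k::field bform \<Rightarrow> 'k bform \<Rightarrow> bool" where
  "witt_eq f g \<longleftrightarrow> sym_nondeg f \<and> sym_nondeg g \<and>
     (\<exists>M1 M2. metabolic M1 \<and> metabolic M2 \<and> isometric (orth f M1) (orth g M2))"

text \<open>[f] \<in> I^n(K): the class of f lies in the additive subgroup of W(K) generated by
  products of n classes from I(K) (= classes of even-dimensional forms).  A generator
  with sign True enters negatively.\<close>
definition in_I_pow :: "nat \<Rightarrow> 'k::field bform \<Rightarrow> bool" where
  "in_I_pow n f \<longleftrightarrow> (\<exists>gs :: (bool \<times> 'k bform list) list.
     (\<forall>(s, fs) \<in> set gs. length fs = n \<and> (\<forall>c\<in>set fs. sym_nondeg c \<and> even (fst c))) \<and>
     witt_eq f (foldr orth (map (\<lambda>(s, fs). (if s then negf else id) (foldr tensor fs (diagf [1]))) gs) zerof))"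

end

theory Submission
  imports Defs "HOL-Combinatorics.List_Permutation"
begin


definition mon :: "('v \<Rightarrow> 'k::field) \<Rightarrow> ('v \<Rightarrow>\<^sub>0 nat) \<Rightarrow> 'k" where
  "mon g m = (\<Prod>v\<in>Poly_Mapping.keys m. g v ^ Poly_Mapping.lookup m v)"

lemma mon_superset:
  assumes "finite A" "Poly_Mapping.keys m \<subseteq> A"
  shows "mon g m = (\<Prod>v\<in>A. g v ^ Poly_Mapping.lookup m v)"
  unfolding mon_def using assms
  by (intro prod.mono_neutral_left) (auto simp: in_keys_iff)

lemma mon_add: "mon g (m + m') = mon g m * mon g m'"
proof -
  let ?A = "Poly_Mapping.keys m \<union> Poly_Mapping.keys m'"
  have f: "finite ?A" by simp
  have k: "Poly_Mapping.keys (m + m') \<subseteq> ?A" by (simp add: keys_add)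
  show ?thesis
    using mon_superset[OF f k, of g] mon_superset[OF f, of m g] mon_superset[OF f, of m' g]
    by (simp add: lookup_add power_add prod.distrib)
qed

lemma mon_zero: "mon g 0 = 1"
  by (simp add: mon_def)

lemma eval_superset:
  assumes "finite A" "Poly_Mapping.keys p \<subseteq> A"
  shows "mpoly_eval g p = (\<Sum>m\<in>A. Poly_Mapping.lookup p m * mon g m)"
  unfolding mpoly_eval_def mon_def[symmetric] using assms
  by (intro sum.mono_neutral_left) (auto simp: in_keys_iff)

lemma eval_add: "mpoly_eval g (p + q) = mpoly_eval g p + mpoly_eval g q"
proof -
  let ?A = "Poly_Mapping.keys p \<union> Poly_Mapping.keys q"
  have f: "finite ?A" by simp
  have k: "Poly_Mapping.keys (p + q) \<subseteq> ?A" by (simp add: keys_add)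
  show ?thesis
    using eval_superset[OF f k, of g] eval_superset[OF f, of p g] eval_superset[OF f, of q g]
    by (simp add: lookup_add distrib_right sum.distrib)
qed

lemma eval_zero: "mpoly_eval g 0 = 0"
  by (simp add: mpoly_eval_def)

lemma eval_single: "mpoly_eval g (Poly_Mapping.single m c) = c * mon g m"
  using eval_superset[of "{m}" "Poly_Mapping.single m c" g] by simp

lemma eval_sum: "finite I \<Longrightarrow> mpoly_eval g (\<Sum>i\<in>I. P i) = (\<Sum>i\<in>I. mpoly_eval g (P i))"
  by (induct I rule: finite_induct) (auto simp: eval_zero eval_add)

lemma over_zero: "subfield F \<Longrightarrow> mpoly_over F V 0"
  by (simp add: mpoly_over_def subfield_def)

lemma over_add: "subfield F \<Longrightarrow> mpoly_over F V p \<Longrightarrow> mpoly_over F V q \<Longrightarrow> mpoly_over F V (p + q)"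
  unfolding mpoly_over_def subfield_def
  by (metis add.right_neutral lookup_add)

lemma over_single:
  "subfield F \<Longrightarrow> c \<in> F \<Longrightarrow> (\<forall>v. Poly_Mapping.lookup m v \<noteq> 0 \<longrightarrow> v \<in> V)
   \<Longrightarrow> mpoly_over F V (Poly_Mapping.single m c)"
  unfolding mpoly_over_def subfield_def
  by (auto simp: lookup_single when_def)

lemma over_sum: "finite I \<Longrightarrow> subfield F \<Longrightarrow> (\<forall>i\<in>I. mpoly_over F V (P i)) \<Longrightarrow> mpoly_over F V (\<Sum>i\<in>I. P i)"
  by (induct I rule: finite_induct) (auto simp: over_zero over_add)

definition PV :: "'k::field set \<Rightarrow> 'v set \<Rightarrow> ('v \<Rightarrow> 'k) \<Rightarrow> 'k \<Rightarrow> bool" where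
  "PV F V g x \<longleftrightarrow> (\<exists>p. mpoly_over F V p \<and> mpoly_eval g p = x)"

lemma PV_terms:
  assumes F: "subfield F" and I: "finite I"
    and h: "\<forall>i\<in>I. c i \<in> F \<and> (\<forall>v. Poly_Mapping.lookup (m i) v \<noteq> 0 \<longrightarrow> v \<in> V)"
  shows "PV F V g (\<Sum>i\<in>I. c i * mon g (m i))"
  unfolding PV_def
  apply (rule exI[of _ "\<Sum>i\<in>I. Poly_Mapping.single (m i) (c i)"])
  using h by (simp add: eval_sum[OF I] eval_single over_sum[OF I F] over_single[OF F])

lemma PV_mult:
  assumes F: "subfield F" and x: "PV F V g x" and y: "PV F V g y"
  shows "PV F V g (x * y)"
proof -
  obtain p where p: "mpoly_over F V p" "mpoly_eval g p = x" using x PV_def by blast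
  obtain q where q: "mpoly_over F V q" "mpoly_eval g q = y" using y PV_def by blast
  have "x * y = (\<Sum>m\<in>Poly_Mapping.keys p. Poly_Mapping.lookup p m * mon g m) *
                (\<Sum>m\<in>Poly_Mapping.keys q. Poly_Mapping.lookup q m * mon g m)"
    using p(2) q(2) eval_superset[of "Poly_Mapping.keys p" p g] eval_superset[of "Poly_Mapping.keys q" q g]
    by simp
  also have "\<dots> = (\<Sum>mm\<in>Poly_Mapping.keys p \<times> Poly_Mapping.keys q.
       (Poly_Mapping.lookup p (fst mm) * Poly_Mapping.lookup q (snd mm)) * mon g (fst mm + snd mm))"
    by (simp add: sum_product sum.cartesian_product mon_add mult_ac split_def)
  finally have e: "x * y = \<dots>" .
  show ?thesis unfolding e
    apply (rule PV_terms[OF F])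
     apply simp
    using p(1) q(1) F unfolding mpoly_over_def subfield_def
    by (auto simp: lookup_add in_keys_iff)
qed

lemma PV_one: "subfield F \<Longrightarrow> PV F V g 1"
  unfolding PV_def
  apply (rule exI[of _ "Poly_Mapping.single 0 1"])
  using eval_single[of g 0 1] by (auto simp: mon_zero over_single subfield_def simp del: single_one)

lemma PV_prod: "finite I \<Longrightarrow> subfield F \<Longrightarrow> (\<forall>i\<in>I. PV F V g (f i)) \<Longrightarrow> PV F V g (\<Prod>i\<in>I. f i)"
  by (induct I rule: finite_induct) (auto simp: PV_one PV_mult)

lemma sum_sq_char2:
  assumes "(2::'k::comm_ring_1) = 0"
  shows "finite I \<Longrightarrow> (\<Sum>i\<in>I. f i)^2 = (\<Sum>i\<in>I. (f i :: 'k)^2)"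
proof (induct I rule: finite_induct)
  case (insert x F)
  have "(f x + sum f F)^2 = f x ^2 + (sum f F)^2 + 2 * f x * sum f F"
    by (simp add: power2_eq_square algebra_simps)
  then show ?case using insert assms by simp
qed simp

definition ind :: "'v set \<Rightarrow> ('v \<Rightarrow>\<^sub>0 nat)" where
  "ind S = (\<Sum>x\<in>S. Poly_Mapping.single x 1)"

lemma lookup_ind: "finite S \<Longrightarrow> Poly_Mapping.lookup (ind S) x = (if x \<in> S then 1 else 0)"
  by (simp add: ind_def lookup_sum lookup_single when_def)

lemma keys_ind: "finite S \<Longrightarrow> Poly_Mapping.keys (ind S) \<subseteq> S"
  by (auto simp: in_keys_iff lookup_ind split: if_splits)

lemma mon_ind: "finite S \<Longrightarrow> mon g (ind S) = (\<Prod>x\<in>S. g x)"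
  using mon_superset[of S "ind S" g] keys_ind[of S] by (simp add: lookup_ind)

lemma ind_inj:
  assumes fS: "finite S" and fS': "finite S'" and e: "m + m + ind S = m' + m' + ind S'"
  shows "S = S' \<and> m = m'"
proof -
  have h: "2 * Poly_Mapping.lookup m x + (if x \<in> S then 1 else 0) =
           2 * Poly_Mapping.lookup m' x + (if x \<in> S' then 1 else 0)" for x
    using arg_cong[OF e, of "\<lambda>p. Poly_Mapping.lookup p x"]
    by (simp add: lookup_add lookup_ind fS fS')
  have SS: "S = S'"
  proof
    show "S \<subseteq> S'" proof fix x assume "x \<in> S" thus "x \<in> S'" using h[of x] by (auto split: if_splits) presburger qed
    show "S' \<subseteq> S" proof fix x assume "x \<in> S'" thus "x \<in> S" using h[of x] by (auto split: if_splits) presburger qed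
  qed
  moreover have "m = m'"
    by (rule poly_mapping_eqI) (use h SS in auto)
  ultimately show ?thesis by simp
qed

lemma eval_sq:
  fixes g :: "'v \<Rightarrow> 'k::field"
  assumes char2: "(2::'k) = 0"
  shows "(mpoly_eval g r)^2 = (\<Sum>m\<in>Poly_Mapping.keys r. (Poly_Mapping.lookup r m)^2 * mon g (m + m))"
proof -
  have "(mpoly_eval g r)^2 = (\<Sum>m\<in>Poly_Mapping.keys r. (Poly_Mapping.lookup r m * mon g m)^2)"
    unfolding eval_superset[of "Poly_Mapping.keys r" r g, simplified]
    using sum_sq_char2[OF char2, of "Poly_Mapping.keys r" "\<lambda>m. Poly_Mapping.lookup r m * mon g m"] by simp
  also have "\<dots> = (\<Sum>m\<in>Poly_Mapping.keys r. (Poly_Mapping.lookup r m)^2 * mon g (m + m))"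
    by (simp add: power_mult_distrib mon_add power2_eq_square mult_ac)
  finally show ?thesis .
qed

lemma key_aniso:
  fixes g :: "'v \<Rightarrow> 'k::field" and N :: nat
  assumes char2: "(2::'k) = 0"
    and K: "rational_function_field F g V"
    and S: "\<And>a. a < N \<Longrightarrow> finite (S a) \<and> S a \<subseteq> V"
    and dist: "\<And>a b. a < N \<Longrightarrow> b < N \<Longrightarrow> S a = S b \<Longrightarrow> a = b"
    and eq: "(\<Sum>a<N. v a ^ 2 * (\<Prod>x\<in>S a. g x)) = 0"
  shows "\<forall>a<N. v a = 0"
proof -
  have F: "subfield F" and indep: "\<And>p. mpoly_over F V p \<Longrightarrow> mpoly_eval g p = 0 \<Longrightarrow> p = 0"
    and rep: "\<And>x. \<exists>p q. mpoly_over F V p \<and> mpoly_over F V q \<and> mpoly_eval g q \<noteq> 0 \<and>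
                    x = mpoly_eval g p / mpoly_eval g q"
    using K unfolding rational_function_field_def by blast+
  have ex: "\<forall>a. \<exists>p q. mpoly_over F V p \<and> mpoly_over F V q \<and> mpoly_eval g q \<noteq> 0 \<and>
       v a = mpoly_eval g p / mpoly_eval g q" using rep by blast
  obtain p q where pq: "\<And>a. mpoly_over F V (p a) \<and> mpoly_over F V (q a) \<and> mpoly_eval g (q a) \<noteq> 0 \<and>
       v a = mpoly_eval g (p a) / mpoly_eval g (q a)"
    using ex by metis
  define Qd where "Qd = (\<Prod>b<N. mpoly_eval g (q b))"
  have Qd0: "Qd \<noteq> 0" unfolding Qd_def proof
    assume "(\<Prod>b<N. mpoly_eval g (q b)) = 0"
    then obtain b where "mpoly_eval g (q b) = 0" using prod_zero_iff[of "{..<N}" "\<lambda>b. mpoly_eval g (q b)"] by auto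
    then show False using pq[of b] by simp
  qed
  define w where "w a = v a * Qd" for a
  have wPV: "PV F V g (w a)" if "a < N" for a
  proof -
    have "Qd = mpoly_eval g (q a) * (\<Prod>b\<in>{..<N}-{a}. mpoly_eval g (q b))"
      using that by (simp add: Qd_def prod.remove)
    hence "w a = mpoly_eval g (p a) * (\<Prod>b\<in>{..<N}-{a}. mpoly_eval g (q b))"
      using pq[of a] by (simp add: w_def)
    moreover have "PV F V g (mpoly_eval g (p a))" using pq[of a] PV_def by blast
    moreover have "PV F V g (\<Prod>b\<in>{..<N}-{a}. mpoly_eval g (q b))"
      by (rule PV_prod) (use F pq in \<open>auto simp: PV_def\<close>)
    ultimately show ?thesis using PV_mult[OF F] by simp
  qed
  obtain r where r: "\<And>a. a < N \<Longrightarrow> mpoly_over F V (r a) \<and> mpoly_eval g (r a) = w a"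
    using wPV unfolding PV_def by metis
  have sum0: "(\<Sum>a<N. w a ^ 2 * (\<Prod>x\<in>S a. g x)) = 0"
  proof -
    have "(\<Sum>a<N. w a ^ 2 * (\<Prod>x\<in>S a. g x)) = Qd^2 * (\<Sum>a<N. v a ^ 2 * (\<Prod>x\<in>S a. g x))"
      by (simp add: w_def sum_distrib_left power_mult_distrib mult_ac)
    then show ?thesis using eq by simp
  qed
  define c where "c a m = Poly_Mapping.lookup (r a) m" for a m
  define T where "T = Sigma {..<N} (\<lambda>a. Poly_Mapping.keys (r a))"
  define key where "key am = snd am + snd am + ind (S (fst am))" for am :: "nat \<times> ('v \<Rightarrow>\<^sub>0 nat)"
  define P where "P = (\<Sum>am\<in>T. Poly_Mapping.single (key am) ((c (fst am) (snd am))^2))"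
  have Tfin: "finite T" unfolding T_def by simp
  have "mpoly_eval g P = (\<Sum>am\<in>T. (c (fst am) (snd am))^2 * mon g (key am))"
    unfolding P_def by (simp add: eval_sum[OF Tfin] eval_single)
  also have "\<dots> = (\<Sum>a<N. \<Sum>m\<in>Poly_Mapping.keys (r a). (c a m)^2 * mon g (m + m) * (\<Prod>x\<in>S a. g x))"
  proof -
    have "(\<Sum>a<N. \<Sum>m\<in>Poly_Mapping.keys (r a). (c a m)^2 * mon g (m + m) * (\<Prod>x\<in>S a. g x))
        = (\<Sum>(a,m)\<in>T. (c a m)^2 * mon g (m + m) * (\<Prod>x\<in>S a. g x))"
      unfolding T_def by (rule sum.Sigma) auto
    also have "\<dots> = (\<Sum>am\<in>T. (c (fst am) (snd am))^2 * mon g (key am))"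
    proof (rule sum.cong)
      fix am assume "am \<in> T"
      then obtain a m where amd: "am = (a, m)" and a: "a < N" unfolding T_def by auto
      show "(case am of (a, m) \<Rightarrow> (c a m)^2 * mon g (m + m) * (\<Prod>x\<in>S a. g x)) =
            (c (fst am) (snd am))^2 * mon g (key am)"
        using S[OF a] by (simp add: amd key_def mon_add mon_ind)
    qed simp
    finally show ?thesis by simp
  qed
  also have "\<dots> = (\<Sum>a<N. w a ^ 2 * (\<Prod>x\<in>S a. g x))"
  proof (rule sum.cong)
    fix a assume a: "a \<in> {..<N}"
    have "w a ^ 2 = (\<Sum>m\<in>Poly_Mapping.keys (r a). (c a m)^2 * mon g (m + m))"
      using r[of a] a eval_sq[OF char2, of g "r a"] by (simp add: c_def)
    then show "(\<Sum>m\<in>Poly_Mapping.keys (r a). (c a m)^2 * mon g (m + m) * (\<Prod>x\<in>S a. g x)) =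
          w a ^ 2 * (\<Prod>x\<in>S a. g x)"
      by (simp add: sum_distrib_right)
  qed simp
  also have "\<dots> = 0" by (rule sum0)
  finally have evP: "mpoly_eval g P = 0" .
  have overP: "mpoly_over F V P"
    unfolding P_def
  proof (rule over_sum[OF Tfin F], intro ballI)
    fix am assume am: "am \<in> T"
    obtain a m where amd: "am = (a, m)" by (cases am)
    have a: "a < N" and m: "m \<in> Poly_Mapping.keys (r a)" using am amd T_def by auto
    have ra: "mpoly_over F V (r a)" using r a by blast
    have cF: "c a m \<in> F" using ra by (simp add: mpoly_over_def c_def)
    have "(c a m)^2 \<in> F" using cF F by (simp add: subfield_def power2_eq_square)
    moreover have "\<forall>x. Poly_Mapping.lookup (key am) x \<noteq> 0 \<longrightarrow> x \<in> V"
    proof (intro allI impI)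
      fix x assume "Poly_Mapping.lookup (key am) x \<noteq> 0"
      hence "Poly_Mapping.lookup m x \<noteq> 0 \<or> x \<in> S a"
        using S[OF a] by (auto simp: key_def amd lookup_add lookup_ind split: if_splits)
      then show "x \<in> V"
        using ra m S[OF a] by (auto simp: mpoly_over_def in_keys_iff)
    qed
    ultimately show "mpoly_over F V (Poly_Mapping.single (key am) ((c (fst am) (snd am))^2))"
      using over_single[OF F] amd by simp
  qed
  have P0: "P = 0" using indep[OF overP evP] .
  show ?thesis
  proof (intro allI impI, rule ccontr)
    fix a0 assume a0: "a0 < N" and v0: "v a0 \<noteq> 0"
    have "w a0 \<noteq> 0" using v0 Qd0 by (simp add: w_def)
    hence "r a0 \<noteq> 0" using r[OF a0] by (auto simp: eval_zero)
    then obtain m0 where m0: "m0 \<in> Poly_Mapping.keys (r a0)"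
      by (metis all_not_in_conv keys_eq_empty)
    have inT: "(a0, m0) \<in> T" using a0 m0 T_def by simp
    have keq: "key am = key (a0, m0) \<longleftrightarrow> am = (a0, m0)" if "am \<in> T" for am
    proof -
      obtain a m where amd: "am = (a, m)" by (cases am)
      have a: "a < N" using that amd T_def by auto
      show ?thesis
        using ind_inj[of "S a" "S a0" m m0] S[OF a] S[OF a0] dist[OF a a0] by (auto simp: key_def amd)
    qed
    have "Poly_Mapping.lookup P (key (a0, m0)) =
          (\<Sum>am\<in>T. if am = (a0, m0) then (c (fst am) (snd am))^2 else 0)"
      unfolding P_def lookup_sum
      by (rule sum.cong) (auto simp: lookup_single when_def keq)
    also have "\<dots> = (c a0 m0)^2" using inT Tfin by simp
    finally have "Poly_Mapping.lookup P (key (a0, m0)) = (c a0 m0)^2" .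
    moreover have "c a0 m0 \<noteq> 0" using m0 by (simp add: c_def in_keys_iff)
    ultimately show False using P0 by simp
  qed
qed



definition diag_ok :: "'k::field bform \<Rightarrow> bool" where
  "diag_ok f \<longleftrightarrow> (\<forall>a<fst f. \<forall>b<fst f. a \<noteq> b \<longrightarrow> snd f a b = 0)"

definition dl :: "'k::field bform \<Rightarrow> 'k list" where
  "dl f = map (\<lambda>a. snd f a a) [0..<fst f]"

lemma length_dl[simp]: "length (dl f) = fst f" by (simp add: dl_def)
lemma nth_dl: "a < fst f \<Longrightarrow> dl f ! a = snd f a a" by (simp add: dl_def)

lemma upt_mult: "[0..<m*n] = concat (map (\<lambda>q. map (\<lambda>r. q*n + r) [0..<n]) [0..<m])"
proof (induct m)
  case (Suc m)
  have "[0..<m*n + n] = [0..<m*n] @ [m*n..<m*n+n]"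
    by (rule upt_add_eq_append) simp
  hence "[0..<Suc m * n] = [0..<m*n] @ [m*n..<m*n+n]" by (simp add: add.commute)
  also have "[m*n..<m*n+n] = map (\<lambda>r. m*n + r) [0..<n]"
    using map_add_upt[of "m*n" n] by (simp add: add.commute)
  finally show ?case using Suc by simp
qed simp

lemma dl_tensor:
  assumes "0 < fst g"
  shows "dl (tensor f g) = concat (map (\<lambda>x. map (\<lambda>y. x * y) (dl g)) (dl f))"
proof -
  let ?n = "fst g"
  have "dl (tensor f g) = map (\<lambda>a. snd f (a div ?n) (a div ?n) * snd g (a mod ?n) (a mod ?n)) [0..<fst f * ?n]"
    by (simp add: dl_def tensor_def)
  also have "\<dots> = concat (map (\<lambda>q. map (\<lambda>r. snd f q q * snd g r r) [0..<?n]) [0..<fst f])"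
    unfolding upt_mult map_concat map_map
    by (intro arg_cong[where f=concat] map_cong refl) (use assms in auto)
  finally show ?thesis by (simp add: dl_def map_concat o_def)
qed

lemma fst_tensor[simp]: "fst (tensor f g) = fst f * fst g" by (simp add: tensor_def)
lemma fst_orth[simp]: "fst (orth f g) = fst f + fst g" by (simp add: orth_def)
lemma fst_diagf[simp]: "fst (diagf xs) = length xs" by (simp add: diagf_def)

lemma diag_tensor:
  assumes f: "diag_ok f" and g: "diag_ok g" and n: "0 < fst g"
  shows "diag_ok (tensor f g)"
  unfolding diag_ok_def
proof (intro allI impI)
  fix a b assume a: "a < fst (tensor f g)" and b: "b < fst (tensor f g)" and ab: "a \<noteq> b"
  let ?n = "fst g"
  have ad: "a div ?n < fst f" and bd: "b div ?n < fst f" using a b n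
    by (simp_all add: less_mult_imp_div_less)
  have am: "a mod ?n < ?n" and bm: "b mod ?n < ?n" using n by simp_all
  show "snd (tensor f g) a b = 0"
  proof (cases "a div ?n = b div ?n")
    case True
    hence "a mod ?n \<noteq> b mod ?n" using ab by (metis div_mod_decomp)
    then show ?thesis using g am bm by (simp add: tensor_def diag_ok_def)
  next
    case False
    then show ?thesis using f ad bd by (simp add: tensor_def diag_ok_def)
  qed
qed

lemma dl_orth: "dl (orth f g) = dl f @ dl g"
proof -
  have "[0..<fst f + fst g] = [0..<fst f] @ map (\<lambda>r. fst f + r) [0..<fst g]"
    using map_add_upt[of "fst f" "fst g"] upt_add_eq_append[of 0 "fst f" "fst g"] by (simp add: add.commute)
  then show ?thesis by (simp add: dl_def orth_def o_def)
qed

lemma diag_orth: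
  assumes f: "diag_ok f" and g: "diag_ok g" shows "diag_ok (orth f g)"
  unfolding diag_ok_def
proof (intro allI impI)
  fix a b assume a: "a < fst (orth f g)" and b: "b < fst (orth f g)" and ab: "a \<noteq> b"
  show "snd (orth f g) a b = 0"
  proof (cases "a < fst f \<and> b < fst f")
    case True then show ?thesis using f ab by (simp add: orth_def diag_ok_def)
  next
    case False
    show ?thesis
    proof (cases "fst f \<le> a \<and> fst f \<le> b")
      case True
      have "a - fst f < fst g" "b - fst f < fst g" "a - fst f \<noteq> b - fst f" using a b ab True by auto
      then show ?thesis using g False True by (simp add: orth_def diag_ok_def)
    next
      case False2: False
      show ?thesis unfolding orth_def snd_conv by (simp only: if_not_P[OF False] if_not_P[OF False2])
    qed
  qed
qed

lemma dl_diagf: "dl (diagf xs) = xs"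
proof -
  have "dl (diagf xs) = map (\<lambda>a. xs ! a) [0..<length xs]"
    unfolding dl_def diagf_def by (intro map_cong) auto
  then show ?thesis by (simp add: map_nth)
qed

lemma diag_diagf: "diag_ok (diagf xs)"
  by (simp add: diag_ok_def diagf_def)

lemma fst_pfister: "fst (pfister as) = 2 ^ length as"
  by (induct as) (simp_all add: pfister_def)

lemma pfister_Cons: "pfister (a # as) = tensor (diagf [1, a]) (pfister as)"
  by (simp add: pfister_def)

lemma diag_pfister: "diag_ok (pfister as)"
  by (induct as) (simp_all add: pfister_Cons diag_diagf diag_tensor fst_pfister, simp add: pfister_def diag_diagf)

lemma dl_pfister_Nil: "dl (pfister []) = [1]"
  by (simp add: pfister_def dl_diagf)

lemma map_mult_one[simp]: "map ((*) (1::'k::field)) xs = xs"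
  by (induct xs) simp_all

lemma dl_pfister_Cons: "dl (pfister (a # as)) = dl (pfister as) @ map (\<lambda>y. a * y) (dl (pfister as))"
  by (simp add: pfister_Cons dl_tensor fst_pfister dl_diagf)

lemma dl_pure: "dl (pure_pfister as) = tl (dl (pfister as))"
proof -
  obtain k where k: "fst (pfister as) = Suc k" by (simp add: fst_pfister) (metis not0_implies_Suc power_not_zero zero_neq_numeral)
  have "[Suc 0..<Suc k] = map Suc [0..<k]" by (simp add: map_Suc_upt)
  moreover have "tl [0..<Suc k] = [Suc 0..<Suc k]" by (simp add: tl_upt)
  ultimately show ?thesis
    by (simp add: dl_def pure_pfister_def k map_tl[symmetric] o_def del: upt_Suc)
qed

lemma fst_pure: "fst (pure_pfister as) = 2 ^ length as - 1"
  by (simp add: pure_pfister_def fst_pfister)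

lemma diag_pure: "diag_ok (pure_pfister as)"
  using diag_pfister[of as] unfolding diag_ok_def pure_pfister_def by auto

lemma hd_dl_pfister: "dl (pfister as) = 1 # tl (dl (pfister as))"
proof (induct as)
  case (Cons a as)
  show ?case unfolding dl_pfister_Cons using Cons by (metis append_Cons list.sel(3))
qed (simp add: dl_pfister_Nil)

lemma bil_diag:
  assumes "diag_ok f"
  shows "bil f v w = (\<Sum>a<fst f. v a * snd f a a * w a)"
  unfolding bil_def
proof (rule sum.cong)
  fix a assume a: "a \<in> {..<fst f}"
  have "(\<Sum>b<fst f. v a * snd f a b * w b) = (\<Sum>b<fst f. if b = a then v a * snd f a a * w a else 0)"
    using assms a by (intro sum.cong) (auto simp: diag_ok_def)
  also have "\<dots> = v a * snd f a a * w a" using a by simp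
  finally show "(\<Sum>b<fst f. v a * snd f a b * w b) = v a * snd f a a * w a" .
qed simp

lemma aniso_diag:
  fixes f :: "'k::field bform"
  assumes d: "diag_ok f"
    and h: "\<And>v :: nat \<Rightarrow> 'k. (\<Sum>a<fst f. v a ^ 2 * dl f ! a) = 0 \<Longrightarrow> \<forall>a<fst f. v a = 0"
  shows "anisotropic f"
  unfolding anisotropic_def
proof (intro allI impI)
  fix v :: "nat \<Rightarrow> 'k" assume nz: "nonzero_vec (fst f) v"
  have "bil f v v = (\<Sum>a<fst f. v a ^ 2 * dl f ! a)"
    unfolding bil_diag[OF d] by (intro sum.cong) (auto simp: nth_dl power2_eq_square)
  then show "bil f v v \<noteq> 0" using h[of v] nz by (auto simp: nonzero_vec_def)
qed

lemma symnd_diag: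
  fixes f :: "'k::field bform"
  assumes d: "diag_ok f" and nz: "\<forall>x\<in>set (dl f). x \<noteq> 0"
  shows "sym_nondeg f"
  unfolding sym_nondeg_def
proof (intro conjI allI impI)
  fix a b assume "a < fst f" "b < fst f"
  then show "snd f a b = snd f b a" using d by (cases "a = b") (auto simp: diag_ok_def)
next
  fix v :: "nat \<Rightarrow> 'k" assume "nonzero_vec (fst f) v"
  then obtain a where a: "a < fst f" "v a \<noteq> 0" by (auto simp: nonzero_vec_def)
  have "snd f a a \<noteq> 0" using nz a by (metis nth_dl length_dl nth_mem)
  have "bil f v (\<lambda>b. if b = a then 1 else 0) = v a * snd f a a"
    unfolding bil_diag[OF d] using a by (simp add: if_distrib cong: if_cong)
  then show "\<exists>w. bil f v w \<noteq> 0" using a \<open>snd f a a \<noteq> 0\<close> by (metis mult_eq_0_iff)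
qed



lemma iso_diag:
  fixes f g :: "'k::field bform"
  assumes df: "diag_ok f" and dg: "diag_ok g" and m: "mset (dl g) = mset (dl f)"
  shows "isometric f g"
proof -
  have len: "fst g = fst f" using mset_eq_length[OF m] by simp
  obtain \<sigma> where bij: "bij_betw \<sigma> {..<fst f} {..<fst f}" and eqs: "\<forall>i<fst f. dl g ! i = dl f ! \<sigma> i"
    using permutation_Ex_bij[of "dl g" "dl f"] m len by auto
  have sl: "\<sigma> a < fst f" if "a < fst f" for a using bij that by (auto simp: bij_betw_def)
  have si: "\<sigma> a = \<sigma> b \<Longrightarrow> a < fst f \<Longrightarrow> b < fst f \<Longrightarrow> a = b" for a b
    using bij by (auto simp: bij_betw_def inj_on_def)
  define P where "P x y = (if x = \<sigma> y then 1 else (0::'k))" for x y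
  define Q where "Q x y = (if y = \<sigma> x then 1 else (0::'k))" for x y
  show ?thesis
    unfolding isometric_def
  proof (rule conjI, simp add: len, rule exI[of _ P], rule exI[of _ Q], intro conjI allI impI)
    fix a b assume a: "a < fst f" and b: "b < fst f"
    have "(\<Sum>c<fst f. P a c * Q c b) = (\<Sum>c<fst f. (\<lambda>x. if a = x \<and> b = x then 1 else 0) (\<sigma> c))"
      by (intro sum.cong) (auto simp: P_def Q_def)
    also have "\<dots> = (\<Sum>x<fst f. if a = x \<and> b = x then 1 else (0::'k))"
      by (rule sum.reindex_bij_betw[OF bij])
    also have "\<dots> = (if a = b then 1 else 0)"
      using a by (cases "a = b") (simp, auto intro!: sum.neutral)
    finally have "(\<Sum>c<fst f. P a c * Q c b) = (if a = b then 1 else 0)" .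
    then show "(\<Sum>c<fst f. P a c * Q c b) = (if a = b then 1 else 0)" by simp
  next
    fix a b assume a: "a < fst f" and b: "b < fst f"
    have inner: "(\<Sum>d<fst f. P c a * snd f c d * P d b) = (if c = \<sigma> a then snd f c (\<sigma> b) else 0)" for c
    proof -
      have "(\<Sum>d<fst f. P c a * snd f c d * P d b) = (\<Sum>d<fst f. if d = \<sigma> b then P c a * snd f c d else 0)"
        by (intro sum.cong) (auto simp: P_def)
      also have "\<dots> = P c a * snd f c (\<sigma> b)" using sl[OF b] by simp
      finally show ?thesis by (simp add: P_def)
    qed
    have "(\<Sum>c<fst f. \<Sum>d<fst f. P c a * snd f c d * P d b) = (\<Sum>c<fst f. if c = \<sigma> a then snd f c (\<sigma> b) else 0)"
      by (simp only: inner)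
    also have "\<dots> = snd f (\<sigma> a) (\<sigma> b)" using sl[OF a] by simp
    finally have e: "(\<Sum>c<fst f. \<Sum>d<fst f. P c a * snd f c d * P d b) = snd f (\<sigma> a) (\<sigma> b)" .
    show "snd g a b = (\<Sum>c<fst f. \<Sum>d<fst f. P c a * snd f c d * P d b)"
    proof (cases "a = b")
      case True
      then show ?thesis unfolding e using eqs a len nth_dl[of a g] nth_dl[of "\<sigma> a" f] sl[OF a] by simp
    next
      case False
      then have "\<sigma> a \<noteq> \<sigma> b" using si a b by blast
      then show ?thesis unfolding e using False dg df a b sl[OF a] sl[OF b] len
        by (simp add: diag_ok_def)
    qed
  qed
qed

lemma metabolic_double:
  fixes f :: "'k::field bform"
  assumes char2: "(2::'k) = 0" and d: "diag_ok f" and snd: "sym_nondeg (orth f f)"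
  shows "metabolic (orth f f)"
proof -
  let ?m = "fst f"
  define ws where "ws a j = (if j = a \<or> j = a + ?m then 1 else (0::'k))" for a j
  have indep: "\<forall>a<?m. c a = 0" if h: "\<forall>j<fst (orth f f). (\<Sum>a<?m. c a * ws a j) = 0" for c
  proof (intro allI impI)
    fix a0 assume a0: "a0 < ?m"
    have "(\<Sum>a<?m. c a * ws a a0) = (\<Sum>a<?m. if a = a0 then c a else 0)"
      using a0 by (intro sum.cong) (auto simp: ws_def)
    also have "\<dots> = c a0" using a0 by simp
    finally show "c a0 = 0" using h a0 by simp
  qed
  have iso: "bil (orth f f) (ws a) (ws b) = 0" if a: "a < ?m" and b: "b < ?m" for a b
  proof -
    let ?e = "\<lambda>j. snd (orth f f) j j"
    have "bil (orth f f) (ws a) (ws b) = (\<Sum>j<?m + ?m. ws a j * ?e j * ws b j)"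
      using bil_diag[OF diag_orth[OF d d]] by simp
    also have "\<dots> = (\<Sum>j<?m + ?m. (if j = a then (if a = b then ?e j else 0) else 0) +
                                  (if j = a + ?m then (if a = b then ?e j else 0) else 0))"
      using a b by (intro sum.cong) (auto simp: ws_def)
    also have "\<dots> = (if a = b then ?e a + ?e (a + ?m) else 0)"
      using a by (simp add: sum.distrib)
    also have "\<dots> = (if a = b then 2 * snd f a a else 0)"
      using a by (simp add: orth_def)
    finally show ?thesis using char2 by simp
  qed
  show ?thesis
    unfolding metabolic_def
    by (intro conjI snd exI[of _ ?m] exI[of _ ws]) (use indep iso in auto)
qed



definition CP :: "'k::field list \<Rightarrow> 'k list \<Rightarrow> 'k list" where
  "CP xs ys = concat (map (\<lambda>x. map (\<lambda>y. x * y) ys) xs)"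

lemma dl_tensor_CP: "0 < fst g \<Longrightarrow> dl (tensor f g) = CP (dl f) (dl g)"
  by (simp add: dl_tensor CP_def)

lemma CP_append1: "CP (xs @ xs') ys = CP xs ys @ CP xs' ys"
  by (simp add: CP_def)

lemma CP_map: "CP (map (\<lambda>y. a * y) xs) ys = map (\<lambda>y. a * y) (CP xs ys)"
  by (induct xs) (simp_all add: CP_def mult.assoc)

lemma dl_pfister_append: "dl (pfister (as @ bs)) = CP (dl (pfister as)) (dl (pfister bs))"
proof (induct as)
  case Nil
  show ?case by (simp add: dl_pfister_Nil CP_def)
next
  case (Cons a as)
  show ?case by (simp add: dl_pfister_Cons Cons CP_append1 CP_map)
qed

lemma mset_CP_one: "mset (CP xs (1 # ys)) = mset xs + mset (CP xs ys)"
  by (induct xs) (simp_all add: CP_def)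

lemma mset_CP_app: "mset (CP xs (ys @ zs)) = mset (CP xs ys) + mset (CP xs zs)"
  by (induct xs) (simp_all add: CP_def)

lemma pf_foldr: "foldr tensor (map (\<lambda>a. diagf [1, a]) as) (diagf [1]) = pfister as"
  by (simp add: pfister_def foldr_map o_def)

fun sl :: "'a list \<Rightarrow> 'a set list" where
  "sl [] = [{}]"
| "sl (v # vs) = sl vs @ map (insert v) (sl vs)"

lemma sl_sub: "S \<in> set (sl vs) \<Longrightarrow> S \<subseteq> set vs"
  by (induct vs arbitrary: S) auto

lemma sl_fin: "S \<in> set (sl vs) \<Longrightarrow> finite S"
  using sl_sub finite_subset by blast

lemma sl_hd: "sl vs = {} # tl (sl vs)"
proof (induct vs)
  case (Cons v vs)
  show ?case using Cons by (metis append_Cons list.sel(3) sl.simps(2))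
qed simp

lemma sl_distinct: "distinct vs \<Longrightarrow> distinct (sl vs)"
proof (induct vs)
  case (Cons v vs)
  have nv: "v \<notin> S" if "S \<in> set (sl vs)" for S using sl_sub[OF that] Cons.prems by auto
  have inj: "inj_on (insert v) (set (sl vs))"
  proof (rule inj_onI)
    fix S S' assume "S \<in> set (sl vs)" "S' \<in> set (sl vs)" "insert v S = insert v S'"
    then show "S = S'" using nv by (metis insert_ident)
  qed
  have "distinct (sl vs)" using Cons by simp
  moreover have "set (sl vs) \<inter> set (map (insert v) (sl vs)) = {}" using nv by auto
  ultimately show ?case using inj by (simp add: distinct_map)
qed simp

lemma sl_tl_ne: "distinct vs \<Longrightarrow> S \<in> set (tl (sl vs)) \<Longrightarrow> S \<noteq> {}"
  using sl_distinct[of vs] sl_hd[of vs] by (metis distinct.simps(2))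

lemma dl_pfister_sl:
  "distinct vs \<Longrightarrow> dl (pfister (map g vs)) = map (\<lambda>S. \<Prod>x\<in>S. g x) (sl vs)"
proof (induct vs)
  case Nil
  show ?case by (simp add: dl_pfister_Nil)
next
  case (Cons v vs)
  have "(\<Prod>x\<in>insert v S. g x) = g v * (\<Prod>x\<in>S. g x)" if "S \<in> set (sl vs)" for S
    using sl_sub[OF that] sl_fin[OF that] Cons.prems by (subst prod.insert) auto
  then show ?case using Cons by (simp add: dl_pfister_Cons o_def)
qed

lemma dl_zerof: "dl zerof = []" by (simp add: dl_def zerof_def)
lemma diag_zerof: "diag_ok zerof" by (simp add: diag_ok_def zerof_def)

lemma metabolic_zerof: "metabolic (zerof :: 'k::field bform)"
  unfolding metabolic_def sym_nondeg_def
  by (auto simp: zerof_def nonzero_vec_def)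



lemma in_set_tlD: "x \<in> set (tl xs) \<Longrightarrow> x \<in> set xs"
  by (cases xs) auto

theorem lemma4p4:
  fixes F :: "'k::field set" and X Y Z :: "nat \<Rightarrow> 'k" and i n :: nat
  assumes char2: "(2::'k) = 0"
    and K: "rational_function_field F (gens X Y Z) (vars i n)"
    and "1 \<le> i" and "i \<le> n"
  shows "let b = tensor (pfister (map X [1..<i]))
                   (orth (pure_pfister (map Y [i..<Suc n])) (pure_pfister (map Z [i..<Suc n])))
         in sym_nondeg b \<and> anisotropic b \<and> fst b = 2 ^ (n + 1) - 2 ^ i \<and> in_I_pow n b"
proof -
  note i1 = \<open>1 \<le> i\<close> and iN = \<open>i \<le> n\<close>
  define g where "g = gens X Y Z"
  define V where "V = vars i n"
  define Xs where "Xs = map VX [1..<i]"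
  define Ys where "Ys = map VY [i..<Suc n]"
  define Zs where "Zs = map VZ [i..<Suc n]"
  have mX: "map X [1..<i] = map g Xs" by (simp add: g_def Xs_def gens_def)
  have mY: "map Y [i..<Suc n] = map g Ys" by (simp add: g_def Ys_def gens_def)
  have mZ: "map Z [i..<Suc n] = map g Zs" by (simp add: g_def Zs_def gens_def)
  have dX: "distinct Xs" by (simp add: Xs_def distinct_map inj_on_def)
  have dY: "distinct Ys" by (simp add: Ys_def distinct_map inj_on_def)
  have dZ: "distinct Zs" by (simp add: Zs_def distinct_map inj_on_def)
  have dXY: "distinct (Xs @ Ys)" using dX dY by (auto simp: Xs_def Ys_def)
  have dXZ: "distinct (Xs @ Zs)" using dX dZ by (auto simp: Xs_def Zs_def)
  have setV: "set Xs \<union> set Ys \<union> set Zs = V"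
    by (auto simp: V_def vars_def Xs_def Ys_def Zs_def atLeastLessThanSuc_atLeastAtMost)
  have K': "rational_function_field F g V" using K by (simp add: g_def V_def)
  have pnz: "(\<Prod>x\<in>S. g x) \<noteq> 0" if "finite S" "S \<subseteq> V" for S
    using key_aniso[OF char2 K', of 1 "\<lambda>_. S" "\<lambda>_. 1"] that by auto
  have lX: "length Xs = i - 1" and lY: "length Ys = n + 1 - i" and lZ: "length Zs = n + 1 - i"
    using iN by (simp_all add: Xs_def Ys_def Zs_def)
  define PX where "PX = pfister (map g Xs)"
  define QY where "QY = pure_pfister (map g Ys)"
  define QZ where "QZ = pure_pfister (map g Zs)"
  define b where "b = tensor PX (orth QY QZ)"
  have pos1: "1 \<le> (2::nat) ^ (n + 1 - i) - 1"
  proof -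
    have "2 ^ 1 \<le> (2::nat) ^ (n + 1 - i)" using iN by (intro power_increasing) auto
    then show ?thesis by simp
  qed
  have posYZ: "0 < fst (orth QY QZ)" using pos1 by (simp add: QY_def QZ_def fst_pure lY lZ)
  have db: "diag_ok b" unfolding b_def PX_def QY_def QZ_def
    by (intro diag_tensor diag_pfister diag_orth diag_pure) (use posYZ in \<open>simp add: QY_def QZ_def\<close>)
  define TL where "TL = tl (sl Ys) @ tl (sl Zs)"
  define BL where "BL = concat (map (\<lambda>S. map (\<lambda>T. S \<union> T) TL) (sl Xs))"
  have TLsub: "T \<subseteq> set Ys \<union> set Zs" "finite T" if "T \<in> set TL" for T
    using that sl_sub[of T Ys] sl_sub[of T Zs] sl_fin[of T Ys] sl_fin[of T Zs]
    by (auto simp: TL_def dest: in_set_tlD)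
  have dlb: "dl b = map (\<lambda>S. \<Prod>x\<in>S. g x) BL"
  proof -
    have "dl b = CP (dl PX) (dl QY @ dl QZ)" unfolding b_def
      by (simp add: dl_tensor_CP[OF posYZ] dl_orth)
    also have "\<dots> = CP (map (\<lambda>S. \<Prod>x\<in>S. g x) (sl Xs)) (map (\<lambda>S. \<Prod>x\<in>S. g x) TL)"
      by (simp add: PX_def QY_def QZ_def TL_def dl_pure dl_pfister_sl dX dY dZ map_tl)
    also have "\<dots> = map (\<lambda>S. \<Prod>x\<in>S. g x) BL"
      unfolding CP_def BL_def map_concat map_map o_def
    proof (intro arg_cong[where f = concat] map_cong refl)
      fix S T assume S: "S \<in> set (sl Xs)" and T: "T \<in> set TL"
      have "S \<inter> T = {}" using sl_sub[OF S] TLsub[OF T]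
        by (auto simp: Xs_def Ys_def Zs_def)
      then show "(\<Prod>x\<in>S. g x) * (\<Prod>x\<in>T. g x) = (\<Prod>x\<in>S \<union> T. g x)"
        using sl_fin[OF S] TLsub(2)[OF T] by (simp add: prod.union_disjoint)
    qed
    finally show ?thesis .
  qed
  have BLsub: "finite S \<and> S \<subseteq> V" if "S \<in> set BL" for S
    using that sl_sub[of _ Xs] sl_fin[of _ Xs] TLsub setV by (fastforce simp: BL_def)
  have BLdist: "distinct BL"
  proof -
    have dTL: "distinct TL"
    proof -
      have "distinct (tl (sl Ys))" "distinct (tl (sl Zs))"
        using sl_distinct[OF dY] sl_distinct[OF dZ] by (simp_all add: distinct_tl)
      moreover have "set (tl (sl Ys)) \<inter> set (tl (sl Zs)) = {}"
      proof (rule ccontr)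
        assume "set (tl (sl Ys)) \<inter> set (tl (sl Zs)) \<noteq> {}"
        then obtain T where T1: "T \<in> set (tl (sl Ys))" and T2: "T \<in> set (tl (sl Zs))" by blast
        have "T \<subseteq> set Ys" "T \<subseteq> set Zs" using T1 T2 sl_sub by (auto dest: in_set_tlD)
        moreover have "set Ys \<inter> set Zs = {}" by (auto simp: Ys_def Zs_def)
        ultimately have "T = {}" by blast
        then show False using sl_tl_ne[OF dY T1] by simp
      qed
      ultimately show ?thesis by (simp add: TL_def)
    qed
    have "BL = map (\<lambda>(S, T). S \<union> T) (List.product (sl Xs) TL)"
      by (simp add: BL_def product_concat_map map_concat o_def)
    moreover have "inj_on (\<lambda>(S, T). S \<union> T) (set (List.product (sl Xs) TL))"
    proof (rule inj_onI, clarsimp)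
      fix S T S' T' assume S: "S \<in> set (sl Xs)" and T: "T \<in> set TL" and S': "S' \<in> set (sl Xs)"
        and T': "T' \<in> set TL" and e: "S \<union> T = S' \<union> T'"
      have d1: "set Xs \<inter> (set Ys \<union> set Zs) = {}" by (auto simp: Xs_def Ys_def Zs_def)
      have "S = (S \<union> T) \<inter> set Xs" "S' = (S' \<union> T') \<inter> set Xs"
        using sl_sub[OF S] sl_sub[OF S'] TLsub[OF T] TLsub[OF T'] d1 by blast+
      moreover have "T = (S \<union> T) - set Xs" "T' = (S' \<union> T') - set Xs"
        using sl_sub[OF S] sl_sub[OF S'] TLsub[OF T] TLsub[OF T'] d1 by blast+
      ultimately show "S = S' \<and> T = T'" using e by metis
    qed
    ultimately show ?thesis
      using distinct_product[OF sl_distinct[OF dX] dTL] by (simp add: distinct_map)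
  qed
  have fstb: "fst b = length BL" using arg_cong[OF dlb, of length] by simp
  have nthb: "dl b ! a = (\<Prod>x\<in>BL ! a. g x)" if "a < fst b" for a
    using that fstb dlb by simp
  have anis: "anisotropic b"
  proof (rule aniso_diag[OF db])
    fix v :: "nat \<Rightarrow> 'k" assume h: "(\<Sum>a<fst b. v a ^ 2 * dl b ! a) = 0"
    have "(\<Sum>a<fst b. v a ^ 2 * (\<Prod>x\<in>BL ! a. g x)) = 0"
      using h nthb by (metis (no_types, lifting) lessThan_iff sum.cong)
    then show "\<forall>a<fst b. v a = 0"
    proof (rule key_aniso[OF char2 K', rotated 2])
      fix a assume "a < fst b" then show "finite (BL ! a) \<and> BL ! a \<subseteq> V"
        using BLsub fstb by simp
    next
      fix a c assume "a < fst b" "c < fst b" "BL ! a = BL ! c"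
      then show "a = c" using BLdist fstb nth_eq_iff_index_eq by metis
    qed
  qed
  have symb: "sym_nondeg b"
    using symnd_diag[OF db] dlb BLsub pnz by auto
  have fst_b: "fst b = 2 ^ (n + 1) - 2 ^ i"
  proof -
    obtain j where j: "i = Suc j" using i1 by (cases i) auto
    obtain k where k: "n + 1 - i = Suc k" using iN by (metis Suc_diff_le Suc_eq_plus1 diff_Suc_Suc)
    have nk: "n + 1 = i + Suc k" using k iN by simp
    have nj: "n - j = Suc k" using k j by simp
    have "fst b = 2 ^ j * ((2 ^ Suc k - 1) + (2 ^ Suc k - 1))"
      by (simp add: b_def PX_def QY_def QZ_def fst_pfister fst_pure lX lY lZ k j nj)
    also have "\<dots> = 2 ^ (n + 1) - 2 ^ i"
    proof -
      have "(2::nat) ^ Suc k \<ge> 1" by simp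
      then have "(2::nat) ^ j * ((2 ^ Suc k - 1) + (2 ^ Suc k - 1)) = 2 ^ j * 2 * 2 ^ Suc k - 2 ^ j * 2"
        by (simp add: algebra_simps diff_mult_distrib2)
      moreover have "n = j + k + 1" using nk j by simp
      ultimately show ?thesis by (simp add: j power_add mult_ac)
    qed
    finally show ?thesis .
  qed
  have inI: "in_I_pow n b"
  proof -
    define gs :: "(bool \<times> 'k bform list) list" where
      "gs = [(False, map (\<lambda>a. diagf [1, a]) (map g (Xs @ Ys))), (False, map (\<lambda>a. diagf [1, a]) (map g (Xs @ Zs)))]"
    have gnz: "g v \<noteq> 0" if "v \<in> V" for v using pnz[of "{v}"] that by simp
    have XYV: "set (Xs @ Ys) \<subseteq> V" "set (Xs @ Zs) \<subseteq> V" using setV by auto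
    have c_ok: "sym_nondeg (diagf [1, g v]) \<and> even (fst (diagf [1, g v]))" if "v \<in> V" for v
      using symnd_diag[OF diag_diagf, of "[1, g v]"] gnz[OF that] by (simp add: dl_diagf)
    have lXY: "length (Xs @ Ys) = n" "length (Xs @ Zs) = n" using lX lY lZ i1 iN by simp_all
    have gs_ok: "\<forall>(s, fs)\<in>set gs. length fs = n \<and> (\<forall>c\<in>set fs. sym_nondeg c \<and> even (fst c))"
      using c_ok XYV lXY unfolding gs_def by auto
    define PXY where "PXY = pfister (map g (Xs @ Ys))"
    define PXZ where "PXZ = pfister (map g (Xs @ Zs))"
    define T where "T = orth PXY (orth PXZ zerof)"
    have Teq: "foldr orth (map (\<lambda>(s, fs). (if s then negf else id) (foldr tensor fs (diagf [1]))) gs) zerof = T"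
      unfolding gs_def T_def PXY_def PXZ_def
      by (simp only: list.map prod.case if_False id_apply pf_foldr foldr_Cons foldr_Nil o_apply id_def)
    have dT: "diag_ok T" unfolding T_def PXY_def PXZ_def
      by (intro diag_orth diag_pfister diag_zerof)
    have prodnz: "\<forall>x\<in>set (map (\<lambda>S. \<Prod>x\<in>S. g x) (sl vs)). x \<noteq> 0" if "set vs \<subseteq> V" for vs
      using that sl_sub[of _ vs] sl_fin[of _ vs] pnz by fastforce
    have dlT: "dl T = dl PXY @ dl PXZ" by (simp add: T_def dl_orth dl_zerof)
    have symT: "sym_nondeg T"
    proof (rule symnd_diag[OF dT])
      show "\<forall>x\<in>set (dl T). x \<noteq> 0"
        unfolding dlT PXY_def PXZ_def dl_pfister_sl[OF dXY] dl_pfister_sl[OF dXZ] set_append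
        using prodnz[OF XYV(1)] prodnz[OF XYV(2)] by blast
    qed
    have dM1: "diag_ok (orth PX PX)" unfolding PX_def by (intro diag_orth diag_pfister)
    have symM1: "sym_nondeg (orth PX PX)"
    proof (rule symnd_diag[OF dM1])
      have "set Xs \<subseteq> V" using setV by blast
      then show "\<forall>x\<in>set (dl (orth PX PX)). x \<noteq> 0"
        unfolding dl_orth PX_def dl_pfister_sl[OF dX] set_append
        using prodnz[of Xs] by blast
    qed
    have met1: "metabolic (orth PX PX)"
      using metabolic_double[OF char2 _ symM1] diag_pfister[of "map g Xs"] unfolding PX_def by blast
    have dL: "diag_ok (orth b (orth PX PX))" by (intro diag_orth db dM1)
    have dR: "diag_ok (orth T zerof)" by (intro diag_orth dT diag_zerof)
    have mseq: "mset (dl (orth T zerof)) = mset (dl (orth b (orth PX PX)))"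
    proof -
      define DY where "DY = dl (pfister (map g Ys))"
      define DZ where "DZ = dl (pfister (map g Zs))"
      have h1: "dl PXY = CP (dl PX) DY" by (simp add: PXY_def PX_def DY_def dl_pfister_append)
      have h2: "dl PXZ = CP (dl PX) DZ" by (simp add: PXZ_def PX_def DZ_def dl_pfister_append)
      have hY: "DY = 1 # dl QY" unfolding DY_def QY_def dl_pure by (rule hd_dl_pfister)
      have hZ: "DZ = 1 # dl QZ" unfolding DZ_def QZ_def dl_pure by (rule hd_dl_pfister)
      have hb: "dl b = CP (dl PX) (dl QY @ dl QZ)" unfolding b_def
        by (simp add: dl_tensor_CP[OF posYZ] dl_orth)
      show ?thesis
        by (simp add: dl_orth dl_zerof dlT h1 h2 hY hZ hb mset_CP_one mset_CP_app)
    qed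
    have iso: "isometric (orth b (orth PX PX)) (orth T zerof)"
      by (rule iso_diag[OF dL dR mseq])
    show ?thesis
      unfolding in_I_pow_def
    proof (intro exI[of _ gs] conjI gs_ok)
      show "witt_eq b (foldr orth (map (\<lambda>(s, fs). (if s then negf else id) (foldr tensor fs (diagf [1]))) gs) zerof)"
        unfolding Teq witt_eq_def
        using symb symT met1 metabolic_zerof iso by blast
    qed
  qed
  show ?thesis
    unfolding Let_def mX mY mZ using symb anis fst_b inI by (simp add: b_def PX_def QY_def QZ_def)
qed

end
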